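(* Let $V$ be a nonempty set, $T:V\to V$, and let $l\ge0$ be an integer with $|T^l(V)|=|T^{l+1}(V)|=m<\infty$. Then $T^{m!+l}=T^l$. If moreover $V$ is a vector space over a field $F$, then $T$ has a vanishing polynomial of degree at most $m^2+l$.
   Context: $T^0$ is the identity and $T^i=T\circ T^{i-1}$. For a vector space $V$ over $F$ and a (not necessarily linear) $T:V\to V$, $p(T)$ for $p(x)=\sum a_ix^i$ is the map $v\mapsto\sum a_iT^i(v)$; a vanishing polynomial of $T$ is a nonzero $p\in F[x]$ with $p(T)(v)=0$ for all $v\in V$. *)

theory Defs
  imports Main "HOL-Computational_Algebra.Polynomial"
begin

definition poly_map :: "('f::field \<Rightarrow> 'v::ab_group_add \<Rightarrow> 'v) \<Rightarrow> 'f poly \<Rightarrow> ('v \<Rightarrow> 'v) \<Rightarrow> 'v \<Rightarrow> 'v" where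
  "poly_map scale p T v = (\<Sum>i\<le>degree p. scale (coeff p i) ((T ^^ i) v))"

definition vanishing_poly :: "('f::field \<Rightarrow> 'v::ab_group_add \<Rightarrow> 'v) \<Rightarrow> ('v \<Rightarrow> 'v) \<Rightarrow> 'f poly \<Rightarrow> bool" where
  "vanishing_poly scale T p \<longleftrightarrow> p \<noteq> 0 \<and> (\<forall>v. poly_map scale p T v = 0)"

end

theory Submission
  imports Defs
begin

lemma funpow_cancel:
  assumes "inj_on f W" "f ` W \<subseteq> W" "x \<in> W" "y \<in> W" "(f ^^ i) x = (f ^^ i) y"
  shows "x = y"
  using assms(3-5)
proof (induction i arbitrary: x y)
  case 0 then show ?case by simp
next
  case (Suc i)
  have "(f ^^ i) (f x) = (f ^^ i) (f y)" using Suc.prems(3)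
    by (simp add: funpow_swap1)
  hence "f x = f y" using Suc.IH assms(2) Suc.prems by blast
  thus ?case using assms(1) Suc.prems inj_on_def by metis
qed

lemma funpow_in: "f ` W \<subseteq> W \<Longrightarrow> x \<in> W \<Longrightarrow> (f ^^ i) x \<in> W"
  by (induction i) auto

lemma perm_period:
  assumes fin: "finite W" and sub: "f ` W \<subseteq> W" and cd: "card (f ` W) = card W"
    and u: "u \<in> W"
  shows "\<exists>c. 1 \<le> c \<and> c \<le> card W \<and> (f ^^ c) u = u"
proof -
  have inj: "inj_on f W" using fin cd by (simp add: eq_card_imp_inj_on)
  define g where "g = (\<lambda>i. (f ^^ i) u)"
  have "\<not> inj_on g {0..card W}"
  proof
    assume "inj_on g {0..card W}"
    hence c1: "card (g ` {0..card W}) = card W + 1"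
      by (simp add: card_image)
    have "g ` {0..card W} \<subseteq> W" unfolding g_def using funpow_in[OF sub u] by blast
    hence "card (g ` {0..card W}) \<le> card W" by (rule card_mono[OF fin])
    with c1 show False by simp
  qed
  then obtain a b where ab: "a \<in> {0..card W}" "b \<in> {0..card W}" "a \<noteq> b" "g a = g b"
    unfolding inj_on_def by blast
  define i where "i = min a b"
  define j where "j = max a b"
  have ij: "i < j" "j \<le> card W" "g i = g j"
    using ab unfolding i_def j_def by (auto simp: min_def max_def)
  have jj: "j = i + (j - i)" using ij(1) by simp
  have "(f ^^ j) u = (f ^^ (i + (j - i))) u" using jj by simp
  also have "\<dots> = (f ^^ i) ((f ^^ (j - i)) u)" by (simp only: funpow_add comp_apply)
  finally have e: "(f ^^ i) ((f ^^ (j - i)) u) = (f ^^ i) u" using ij(3) unfolding g_def by simp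
  have "(f ^^ (j - i)) u = u"
    by (rule funpow_cancel[OF inj sub funpow_in[OF sub u] u e])
  moreover have "1 \<le> j - i" "j - i \<le> card W" using ij by auto
  ultimately show ?thesis by blast
qed

lemma main_period:
  assumes "T ` V \<subseteq> V" "finite ((T ^^ l) ` V)"
    "card ((T ^^ Suc l) ` V) = card ((T ^^ l) ` V)" "v \<in> V"
  shows "\<exists>c. 1 \<le> c \<and> c \<le> card ((T ^^ l) ` V) \<and> (T ^^ (c + l)) v = (T ^^ l) v"
proof -
  let ?W = "(T ^^ l) ` V"
  have img: "T ` ?W = (T ^^ Suc l) ` V"
    by (simp add: image_image)
  have sub: "T ` ?W \<subseteq> ?W"
    using assms(1) by (auto simp: funpow_swap1 simp del: funpow.simps)
  obtain c where c: "1 \<le> c" "c \<le> card ?W" "(T ^^ c) ((T ^^ l) v) = (T ^^ l) v"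
    using perm_period[OF assms(2) sub, of "(T ^^ l) v"] img assms(3,4) by auto
  thus ?thesis by (intro exI[of _ c]) (simp add: funpow_add)
qed

lemma funpow_mult_fix: "(f ^^ c) u = u \<Longrightarrow> (f ^^ (c * k)) u = u"
  by (induction k) (auto simp: funpow_add)

context vector_space
begin

lemma pm_sum:
  assumes "degree p < N"
  shows "poly_map scale p T v = (\<Sum>i<N. scale (coeff p i) ((T ^^ i) v))"
proof -
  have "poly_map scale p T v = (\<Sum>i<Suc (degree p). scale (coeff p i) ((T ^^ i) v))"
    unfolding poly_map_def by (simp add: lessThan_Suc_atMost)
  also have "\<dots> = (\<Sum>i<N. scale (coeff p i) ((T ^^ i) v))"
    using assms by (intro sum.mono_neutral_left) (auto simp: coeff_eq_0)
  finally show ?thesis .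
qed

lemma pm_diff: "poly_map scale (p - q) T v = poly_map scale p T v - poly_map scale q T v"
proof -
  define N where "N = Suc (max (degree p) (degree q))"
  have "degree (p - q) < N" unfolding N_def
    using degree_diff_le_max[of p q] by linarith
  moreover have "degree p < N" "degree q < N" unfolding N_def by auto
  ultimately show ?thesis using pm_sum[of p N] pm_sum[of q N] pm_sum[of "p - q" N]
    by (simp only: coeff_diff scale_left_diff_distrib sum_subtractf)
qed

lemma pm_shift1: "poly_map scale (pCons 0 p) T v = poly_map scale p T (T v)"
proof -
  have d: "degree (pCons 0 p) < Suc (Suc (degree p))" by (simp add: degree_pCons_le le_imp_less_Suc)
  have "poly_map scale (pCons 0 p) T v = (\<Sum>i<Suc (Suc (degree p)). scale (coeff (pCons 0 p) i) ((T ^^ i) v))"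
    by (rule pm_sum[OF d])
  also have "\<dots> = (\<Sum>i<Suc (degree p). scale (coeff p i) ((T ^^ Suc i) v))"
    by (subst sum.lessThan_Suc_shift) simp
  also have "\<dots> = poly_map scale p T (T v)"
    by (subst pm_sum[of p "Suc (degree p)"]) (auto simp: funpow_Suc_right simp del: funpow.simps)
  finally show ?thesis .
qed

lemma pm_shift: "poly_map scale (monom 1 k * p) T v = poly_map scale p T ((T ^^ k) v)"
proof (induction k arbitrary: v)
  case 0 then show ?case by simp
next
  case (Suc k)
  have "monom 1 (Suc k) * p = pCons 0 (monom 1 k * p)" by (simp add: monom_Suc)
  hence "poly_map scale (monom 1 (Suc k) * p) T v = poly_map scale p T ((T ^^ k) (T v))"
    using pm_shift1 Suc.IH by simp
  thus ?case by (simp add: funpow_Suc_right del: funpow.simps)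
qed

end

lemma part2:
  fixes scale :: "'f::field \<Rightarrow> 'v::ab_group_add \<Rightarrow> 'v"
  assumes vs: "vector_space scale" and fin: "finite (range (T ^^ l))"
    and cd: "card (range (T ^^ Suc l)) = card (range (T ^^ l))"
  shows "\<exists>p::'f poly. vanishing_poly scale T p \<and> degree p \<le> card (range (T ^^ l)) ^ 2 + l"
proof -
  define m where "m = card (range (T ^^ l))"
  define Q :: "'f poly" where "Q = (\<Prod>c\<in>{1..m}. monom 1 c - 1)"
  define p where "p = monom 1 l * Q"
  have fac_nz: "monom (1::'f) c - 1 \<noteq> 0" if "c \<ge> 1" for c
  proof
    assume "monom (1::'f) c - 1 = 0"
    hence "coeff (monom (1::'f) c - 1) c = 0" by simp
    thus False using that by simp
  qed
  have Qnz: "Q \<noteq> 0" unfolding Q_def using fac_nz by auto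
  have "degree Q \<le> (\<Sum>c\<in>{1..m}. degree (monom (1::'f) c - 1))"
    unfolding Q_def using degree_prod_sum_le[of "{1..m}" "\<lambda>c. monom (1::'f) c - 1"]
    by (simp add: o_def)
  also have "\<dots> \<le> (\<Sum>c\<in>{1..m}. m)"
  proof (rule sum_mono)
    fix c assume "c \<in> {1..m}"
    have "degree (monom (1::'f) c - 1) \<le> max (degree (monom (1::'f) c)) (degree (1::'f poly))"
      by (rule degree_diff_le_max)
    thus "degree (monom (1::'f) c - 1) \<le> m" using degree_monom_le[of "1::'f" c] \<open>c \<in> {1..m}\<close>
      by auto
  qed
  also have "\<dots> = m ^ 2" by (simp add: power2_eq_square)
  finally have dQ: "degree Q \<le> m ^ 2" .
  have dp: "degree p \<le> m ^ 2 + l" unfolding p_def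
    using degree_mult_eq[OF _ Qnz, of "monom 1 l"] dQ by (simp add: degree_monom_eq)
  have van: "poly_map scale p T v = 0" for v
  proof -
    obtain c where c: "1 \<le> c" "c \<le> m" "(T ^^ (c + l)) v = (T ^^ l) v"
      using main_period[of T UNIV l v] fin cd by (auto simp: m_def)
    define u where "u = (T ^^ l) v"
    have cu: "(T ^^ c) u = u" using c(3) by (simp add: u_def funpow_add)
    define R :: "'f poly" where "R = (\<Prod>d\<in>{1..m} - {c}. monom 1 d - 1)"
    have "Q = (monom 1 c - 1) * R" unfolding Q_def R_def
      using c by (subst prod.remove[of _ c]) auto
    hence Q': "Q = monom 1 c * R - R" by (simp add: left_diff_distrib)
    have "poly_map scale p T v = poly_map scale Q T u"
      unfolding p_def u_def by (rule vector_space.pm_shift[OF vs])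
    also have "\<dots> = poly_map scale R T ((T ^^ c) u) - poly_map scale R T u"
      unfolding Q' by (simp add: vector_space.pm_diff[OF vs] vector_space.pm_shift[OF vs])
    also have "\<dots> = 0" using cu by simp
    finally show ?thesis .
  qed
  have "p \<noteq> 0" unfolding p_def using Qnz by (simp add: monom_eq_0_iff)
  thus ?thesis using van dp unfolding vanishing_poly_def m_def by blast
qed

lemma part1:
  assumes "T ` V \<subseteq> V" "finite ((T ^^ l) ` V)"
    "card ((T ^^ Suc l) ` V) = card ((T ^^ l) ` V)" "v \<in> V"
  shows "(T ^^ (fact (card ((T ^^ l) ` V)) + l)) v = (T ^^ l) v"
proof -
  obtain c where c: "1 \<le> c" "c \<le> card ((T ^^ l) ` V)" "(T ^^ (c + l)) v = (T ^^ l) v"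
    using main_period[OF assms] by auto
  have cu: "(T ^^ c) ((T ^^ l) v) = (T ^^ l) v" using c(3) by (simp add: funpow_add)
  obtain k where k: "fact (card ((T ^^ l) ` V)) = c * k" using dvd_fact[OF c(1,2)] by (auto elim: dvdE)
  have "(T ^^ (fact (card ((T ^^ l) ` V)))) ((T ^^ l) v) = (T ^^ l) v"
    unfolding k by (rule funpow_mult_fix[OF cu])
  thus ?thesis by (simp add: funpow_add)
qed

theorem mainTheorem15:
  shows "(\<forall>(V::'a set) (T::'a \<Rightarrow> 'a) (l::nat) (m::nat).
            V \<noteq> {} \<and> T ` V \<subseteq> V \<and>
            finite ((T ^^ l) ` V) \<and> finite ((T ^^ Suc l) ` V) \<and>
            card ((T ^^ l) ` V) = m \<and> card ((T ^^ Suc l) ` V) = m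
          \<longrightarrow> (\<forall>v\<in>V. (T ^^ (fact m + l)) v = (T ^^ l) v))
       \<and> (\<forall>(scale::'f::field \<Rightarrow> 'v::ab_group_add \<Rightarrow> 'v) (T::'v \<Rightarrow> 'v) (l::nat) (m::nat).
            vector_space scale \<and>
            finite (range (T ^^ l)) \<and> finite (range (T ^^ Suc l)) \<and>
            card (range (T ^^ l)) = m \<and> card (range (T ^^ Suc l)) = m
          \<longrightarrow> (\<exists>p::'f poly. vanishing_poly scale T p \<and> degree p \<le> m ^ 2 + l))"
proof -
  have A: "\<forall>(V::'a set) (T::'a \<Rightarrow> 'a) (l::nat) (m::nat).
            V \<noteq> {} \<and> T ` V \<subseteq> V \<and>
            finite ((T ^^ l) ` V) \<and> finite ((T ^^ Suc l) ` V) \<and>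
            card ((T ^^ l) ` V) = m \<and> card ((T ^^ Suc l) ` V) = m
          \<longrightarrow> (\<forall>v\<in>V. (T ^^ (fact m + l)) v = (T ^^ l) v)"
    using part1 by metis
  have B: "\<forall>(scale::'f::field \<Rightarrow> 'v::ab_group_add \<Rightarrow> 'v) (T::'v \<Rightarrow> 'v) (l::nat) (m::nat).
            vector_space scale \<and>
            finite (range (T ^^ l)) \<and> finite (range (T ^^ Suc l)) \<and>
            card (range (T ^^ l)) = m \<and> card (range (T ^^ Suc l)) = m
          \<longrightarrow> (\<exists>p::'f poly. vanishing_poly scale T p \<and> degree p \<le> m ^ 2 + l)"
    using part2 by metis
  show ?thesis using A B by blast
qed

end
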